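(* For a semigroup $S$ the following are equivalent: (i) $S$ is regular; (ii) $\underline{B}\cap\underline{A}=\underline{B}\circ\underline{A}$ for every IF left ideal $A=(\mu_A,\nu_A)$ and every IF right ideal $B=(\mu_B,\nu_B)$ of $S$.
   Context: A semigroup $S$ is regular if for every $a\in S$ there is $x\in S$ with $a=axa$. An intuitionistic fuzzy (IF) subset of $S$ is a pair $A=(\mu_A,\nu_A)$ of functions $S\to[0,1]$ with $\mu_A(x)+\nu_A(x)\le1$ for all $x$. $A$ is an IF right (resp. left) ideal of $S$ if $\mu_A(xy)\ge\mu_A(x)$ and $\nu_A(xy)\le\nu_A(x)$ (resp. $\mu_A(xy)\ge\mu_A(y)$ and $\nu_A(xy)\le\nu_A(y)$) for all $x,y\in S$. For $x\in S$ and $\alpha,\beta\in[0,1]$ with $\alpha+\beta\le1$, the IF point $x_{(\alpha,\beta)}$ is the IF subset of $S$ with value $(\alpha,\beta)$ at $x$ and $(0,1)$ elsewhere (so all points $x_{(0,1)}$ coincide). $\underline{S}$ is the set of all IF points of $S$; it is a semigroup under $x_{(\alpha,\beta)}\circ y_{(\gamma,\delta)}=(xy)_{(\min(\alpha,\gamma),\max(\beta,\delta))}$. For an IF subset $A$, $\underline{A}=\{x_{(\alpha,\beta)}\in\underline{S}:\mu_A(x)\ge\alpha,\ \nu_A(x)\le\beta\}$. For subsets $X,Y\subseteq\underline{S}$, $X\circ Y=\{p\circ q:p\in X,q\in Y\}$. *)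

theory Defs
  imports Complex_Main
begin

type_synonym 'a ifset = "('a \<Rightarrow> real) \<times> ('a \<Rightarrow> real)"

definition regular_semigroup :: "'a::semigroup_mult itself \<Rightarrow> bool" where
  "regular_semigroup _ \<longleftrightarrow> (\<forall>a::'a. \<exists>x. a = a * x * a)"

definition is_IFset :: "'a ifset \<Rightarrow> bool" where
  "is_IFset A \<longleftrightarrow> (\<forall>x. 0 \<le> fst A x \<and> fst A x \<le> 1 \<and> 0 \<le> snd A x \<and> snd A x \<le> 1
                        \<and> fst A x + snd A x \<le> 1)"

definition IF_right_ideal :: "'a::semigroup_mult ifset \<Rightarrow> bool" where
  "IF_right_ideal A \<longleftrightarrow> is_IFset A \<and>
     (\<forall>x y. fst A (x * y) \<ge> fst A x \<and> snd A (x * y) \<le> snd A x)"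

definition IF_left_ideal :: "'a::semigroup_mult ifset \<Rightarrow> bool" where
  "IF_left_ideal A \<longleftrightarrow> is_IFset A \<and>
     (\<forall>x y. fst A (x * y) \<ge> fst A y \<and> snd A (x * y) \<le> snd A y)"

definition IF_params :: "real \<Rightarrow> real \<Rightarrow> bool" where
  "IF_params \<alpha> \<beta> \<longleftrightarrow> 0 \<le> \<alpha> \<and> \<alpha> \<le> 1 \<and> 0 \<le> \<beta> \<and> \<beta> \<le> 1 \<and> \<alpha> + \<beta> \<le> 1"

definition IF_point :: "'a \<Rightarrow> real \<Rightarrow> real \<Rightarrow> 'a ifset" where
  "IF_point x \<alpha> \<beta> = ((\<lambda>y. if y = x then \<alpha> else 0), (\<lambda>y. if y = x then \<beta> else 1))"

definition IF_points :: "'a ifset set" where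
  "IF_points = {IF_point x \<alpha> \<beta> | x \<alpha> \<beta>. IF_params \<alpha> \<beta>}"

definition IF_under :: "'a ifset \<Rightarrow> 'a ifset set" where
  "IF_under A = {IF_point x \<alpha> \<beta> | x \<alpha> \<beta>. IF_params \<alpha> \<beta> \<and> fst A x \<ge> \<alpha> \<and> snd A x \<le> \<beta>}"

definition IF_setprod :: "'a::semigroup_mult ifset set \<Rightarrow> 'a ifset set \<Rightarrow> 'a ifset set" where
  "IF_setprod X Y = {IF_point (x * y) (min \<alpha> \<gamma>) (max \<beta> \<delta>) | x y \<alpha> \<beta> \<gamma> \<delta>.
      IF_params \<alpha> \<beta> \<and> IF_params \<gamma> \<delta> \<and> IF_point x \<alpha> \<beta> \<in> X \<and> IF_point y \<gamma> \<delta> \<in> Y}"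

end

theory Submission
  imports Defs
begin

lemma point_eq:
  assumes "IF_point x a b = IF_point x' a' b'" "\<not> (a = 0 \<and> b = 1)"
  shows "x = x' \<and> a = a' \<and> b = b'"
proof -
  have 1: "fst (IF_point x a b) x = fst (IF_point x' a' b') x"
    and 2: "snd (IF_point x a b) x = snd (IF_point x' a' b') x" using assms(1) by simp_all
  have "a = (if x = x' then a' else 0)" "b = (if x = x' then b' else 1)"
    using 1 2 by (auto simp: IF_point_def split: if_splits)
  then show ?thesis using assms(2) by (auto split: if_splits)
qed

lemma zero_point: "IF_point x 0 1 = IF_point y 0 1"
  by (simp add: IF_point_def)

lemma point_in_under:
  assumes "IF_point x a b \<in> IF_under B" "IF_params a b" "is_IFset B"
  shows "fst B x \<ge> a \<and> snd B x \<le> b"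
proof (cases "a = 0 \<and> b = 1")
  case True then show ?thesis using assms(3) by (auto simp: is_IFset_def)
next
  case False
  from assms(1) obtain x' a' b' where e: "IF_point x a b = IF_point x' a' b'"
    and c: "fst B x' \<ge> a'" "snd B x' \<le> b'" by (auto simp: IF_under_def)
  from point_eq[OF e False] c show ?thesis by simp
qed

lemma under_intro:
  "IF_params a b \<Longrightarrow> fst B x \<ge> a \<Longrightarrow> snd B x \<le> b \<Longrightarrow> IF_point x a b \<in> IF_under B"
  by (auto simp: IF_under_def)

definition chi :: "'a set \<Rightarrow> 'a ifset" where
  "chi R = ((\<lambda>x. if x \<in> R then 1 else 0), (\<lambda>x. if x \<in> R then 0 else 1))"

lemma chi_IF: "is_IFset (chi R)"
  by (auto simp: is_IFset_def chi_def)

theorem theorem3p15: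
  shows "regular_semigroup TYPE('a::semigroup_mult) \<longleftrightarrow>
    (\<forall>A B :: 'a ifset. IF_left_ideal A \<and> IF_right_ideal B \<longrightarrow>
        IF_under B \<inter> IF_under A = IF_setprod (IF_under B) (IF_under A))"
proof
  assume reg: "regular_semigroup TYPE('a)"
  show "\<forall>A B :: 'a ifset. IF_left_ideal A \<and> IF_right_ideal B \<longrightarrow>
        IF_under B \<inter> IF_under A = IF_setprod (IF_under B) (IF_under A)"
  proof (intro allI impI)
    fix A B :: "'a ifset"
    assume h: "IF_left_ideal A \<and> IF_right_ideal B"
    have iA: "is_IFset A" and iB: "is_IFset B" using h
      by (auto simp: IF_left_ideal_def IF_right_ideal_def)
    have lA: "\<And>x y. fst A (x*y) \<ge> fst A y \<and> snd A (x*y) \<le> snd A y" using h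
      by (auto simp: IF_left_ideal_def)
    have rB: "\<And>x y. fst B (x*y) \<ge> fst B x \<and> snd B (x*y) \<le> snd B x" using h
      by (auto simp: IF_right_ideal_def)
    show "IF_under B \<inter> IF_under A = IF_setprod (IF_under B) (IF_under A)"
    proof
      show "IF_under B \<inter> IF_under A \<subseteq> IF_setprod (IF_under B) (IF_under A)"
      proof
        fix p assume p: "p \<in> IF_under B \<inter> IF_under A"
        then obtain x a b where px: "p = IF_point x a b" and pr: "IF_params a b"
          and cB: "fst B x \<ge> a" "snd B x \<le> b" by (auto simp: IF_under_def)
        obtain s where xs: "x = x * s * x" using reg unfolding regular_semigroup_def by blast
        have xs': "x = x * (s * x)" using xs by (simp add: mult.assoc)
        show "p \<in> IF_setprod (IF_under B) (IF_under A)"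
        proof (cases "a = 0 \<and> b = 1")
          case True
          have p01: "IF_params 0 1" by (simp add: IF_params_def)
          have "IF_point x 0 1 \<in> IF_under B" "IF_point x 0 1 \<in> IF_under A"
            using iA iB p01 by (auto intro!: under_intro simp: is_IFset_def)
          moreover have "p = IF_point (x*x) (min 0 0) (max 1 1)"
            using True px zero_point by simp
          ultimately show ?thesis using p01 unfolding IF_setprod_def by blast
        next
          case False
          have "p \<in> IF_under A" using p by simp
          then have cA: "fst A x \<ge> a" "snd A x \<le> b"
            using point_in_under[OF _ pr iA] px by auto
          have "IF_point (s*x) a b \<in> IF_under A"
            using lA[of s x] lA[of x s] cA pr by (auto intro!: under_intro)
          moreover have "IF_point x a b \<in> IF_under B" using cB pr by (auto intro!: under_intro)
          moreover have "p = IF_point (x*(s*x)) (min a a) (max b b)" using px xs' by simp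
          ultimately show ?thesis using pr unfolding IF_setprod_def by blast
        qed
      qed
    next
      show "IF_setprod (IF_under B) (IF_under A) \<subseteq> IF_under B \<inter> IF_under A"
      proof
        fix p assume "p \<in> IF_setprod (IF_under B) (IF_under A)"
        then obtain x y a b c d where p: "p = IF_point (x*y) (min a c) (max b d)"
          and pr: "IF_params a b" "IF_params c d"
          and xB: "IF_point x a b \<in> IF_under B" and yA: "IF_point y c d \<in> IF_under A"
          unfolding IF_setprod_def by blast
        have cB: "fst B x \<ge> a" "snd B x \<le> b" using point_in_under[OF xB pr(1) iB] by auto
        have cA: "fst A y \<ge> c" "snd A y \<le> d" using point_in_under[OF yA pr(2) iA] by auto
        have pm: "IF_params (min a c) (max b d)" using pr
          by (auto simp: IF_params_def min_def max_def)
        have "IF_point (x*y) (min a c) (max b d) \<in> IF_under B"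
          using rB[of x y] cB pm by (intro under_intro) (auto simp: min_def max_def)
        moreover have "IF_point (x*y) (min a c) (max b d) \<in> IF_under A"
          using lA[of y x] cA pm by (intro under_intro) (auto simp: min_def max_def)
        ultimately show "p \<in> IF_under B \<inter> IF_under A" using p by simp
      qed
    qed
  qed
next
  assume H: "\<forall>A B :: 'a ifset. IF_left_ideal A \<and> IF_right_ideal B \<longrightarrow>
        IF_under B \<inter> IF_under A = IF_setprod (IF_under B) (IF_under A)"
  show "regular_semigroup TYPE('a)"
    unfolding regular_semigroup_def
  proof
    fix a :: 'a
    define R where "R = {a} \<union> {a * s | s. True}"
    define L where "L = {a} \<union> {s * a | s. True}"
    have Rc: "\<And>x y. x \<in> R \<Longrightarrow> x * y \<in> R" unfolding R_def
      by (auto simp: mult.assoc)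
    have Lc: "\<And>x y. y \<in> L \<Longrightarrow> x * y \<in> L" unfolding L_def
    proof -
      fix x y assume "y \<in> {a} \<union> {s * a |s. True}"
      then obtain s where "y = a \<or> y = s * a" by blast
      then show "x * y \<in> {a} \<union> {s * a |s. True}"
        by (metis (mono_tags, lifting) UnI2 mem_Collect_eq mult.assoc)
    qed
    have rI: "IF_right_ideal (chi R)" unfolding IF_right_ideal_def
      using chi_IF Rc by (auto simp: chi_def)
    have lI: "IF_left_ideal (chi L)" unfolding IF_left_ideal_def
      using chi_IF Lc by (auto simp: chi_def)
    have p10: "IF_params 1 0" by (simp add: IF_params_def)
    have "IF_point a 1 0 \<in> IF_under (chi R) \<inter> IF_under (chi L)"
      using p10 by (auto intro!: under_intro simp: chi_def R_def L_def)
    then have "IF_point a 1 0 \<in> IF_setprod (IF_under (chi R)) (IF_under (chi L))"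
      using H rI lI by blast
    then obtain x y al b c d where e: "IF_point a 1 0 = IF_point (x*y) (min al c) (max b d)"
      and pr: "IF_params al b" "IF_params c d"
      and xB: "IF_point x al b \<in> IF_under (chi R)" and yA: "IF_point y c d \<in> IF_under (chi L)"
      unfolding IF_setprod_def by blast
    from point_eq[OF e] have axy: "a = x*y" and m: "min al c = 1" by auto
    have al: "al = 1" and c: "c = 1" using m pr by (auto simp: IF_params_def min_def split: if_splits)
    have "fst (chi R) x \<ge> 1" using point_in_under[OF xB pr(1) chi_IF] al by simp
    then have xR: "x \<in> R" by (auto simp: chi_def split: if_splits)
    have "fst (chi L) y \<ge> 1" using point_in_under[OF yA pr(2) chi_IF] c by simp
    then have yL: "y \<in> L" by (auto simp: chi_def split: if_splits)
    show "\<exists>z. a = a * z * a"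
    proof -
      { assume "x = a" "y = a"
        then have h: "a * a = a" using axy by metis
        have "a * a * a = a" by (simp only: h)
        then have "a = a * a * a" by (rule sym)
        then have ?thesis by blast }
      moreover
      { fix s assume "x = a" "y = s * a"
        then have ?thesis using axy by (metis mult.assoc) }
      moreover
      { fix s assume "x = a * s" "y = a"
        then have ?thesis using axy by (metis mult.assoc) }
      moreover
      { fix s t assume "x = a * s" "y = t * a"
        then have "a = a * (s * t) * a" using axy by (metis mult.assoc)
        then have ?thesis by blast }
      ultimately show ?thesis using xR yL unfolding R_def L_def by blast
    qed
  qed
qed

end
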